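(* Let $n\ge2$ and let $r:(0,1]\to[0,\infty)$ be continuous with $r(1)=0$, $\lim_{t\to0^+}r(t)=\infty$ and $r(t)>0$ for all $t\in(0,1)$. Then the map $F:\mathcal K_0^n\times[0,1]\to\mathcal K_0^n$ defined by $F(K,0)=K$ and $F(K,t)=K\cap r(t)\mathbb B$ for $t\in(0,1]$ is continuous (with $\mathcal K_0^n$ carrying the metric $d_{AW}$).
   Context: $\mathbb R^n$ carries the Euclidean norm $\|\cdot\|$ with closed unit ball $\mathbb B$; $d(x,A)=\inf_{a\in A}\|x-a\|$. $\mathcal K^n$ is the family of nonempty closed convex subsets of $\mathbb R^n$, $\mathcal K_0^n$ those containing $0$. The Attouch–Wets metric is $d_{AW}(A,K)=\sup_{j\in\mathbb N}\min\{\frac1j,\sup_{\|x\|<j}|d(x,A)-d(x,K)|\}$. *)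

theory Defs
  imports "HOL-Analysis.Analysis"
begin

definition K0 :: "'a::euclidean_space set set" where
  "K0 = {K. K \<noteq> {} \<and> closed K \<and> convex K \<and> 0 \<in> K}"

definition dAW :: "'a::euclidean_space set \<Rightarrow> 'a set \<Rightarrow> real" where
  "dAW A K = (SUP j\<in>{1::nat..}. min (1 / real j)
       (SUP x\<in>{x. norm x < real j}. \<bar>infdist x A - infdist x K\<bar>))"

definition Ftrunc :: "(real \<Rightarrow> real) \<Rightarrow> 'a::euclidean_space set \<Rightarrow> real \<Rightarrow> 'a set" where
  "Ftrunc r K t = (if t = 0 then K else K \<inter> cball 0 (r t))"

end

theory Submission
  imports Defs
begin

lemma K0_infdist_le: "A \<in> K0 \<Longrightarrow> infdist x A \<le> norm x"
  unfolding K0_def using infdist_le[of 0 A x] by auto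

lemma inner_bdd:
  assumes "A \<in> K0" "B \<in> K0"
  shows "bdd_above ((\<lambda>x. \<bar>infdist x A - infdist x B\<bar>) ` {x. norm x < real j})"
proof (rule bdd_aboveI2)
  fix x :: 'a assume "x \<in> {x. norm x < real j}"
  then have "norm x < real j" by simp
  moreover have "infdist x A \<le> norm x" "infdist x B \<le> norm x"
    using K0_infdist_le assms by auto
  moreover have "infdist x A \<ge> 0" "infdist x B \<ge> 0" by (auto simp: infdist_nonneg)
  ultimately show "\<bar>infdist x A - infdist x B\<bar> \<le> real j" by linarith
qed

lemma dAW_le:
  assumes "A \<in> K0" "B \<in> K0"
    and H: "\<forall>j::nat. j \<ge> 1 \<longrightarrow> 1 / real j \<le> e \<or>
             (\<forall>x. norm x < real j \<longrightarrow> \<bar>infdist x A - infdist x B\<bar> \<le> e)"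
  shows "dAW A B \<le> e"
  unfolding dAW_def
proof (rule cSUP_least)
  show "{1::nat..} \<noteq> {}" by auto
  fix j :: nat assume "j \<in> {1..}"
  then have j: "j \<ge> 1" by simp
  from H j have "1 / real j \<le> e \<or>
             (\<forall>x. norm x < real j \<longrightarrow> \<bar>infdist x A - infdist x B\<bar> \<le> e)" by simp
  then show "min (1 / real j) (SUP x\<in>{x. norm x < real j}. \<bar>infdist x A - infdist x B\<bar>) \<le> e"
  proof (elim disjE)
    assume "1 / real j \<le> e" then show ?thesis by linarith
  next
    assume h: "\<forall>x. norm x < real j \<longrightarrow> \<bar>infdist x A - infdist x B\<bar> \<le> e"
    have "(SUP x\<in>{x. norm x < real j}. \<bar>infdist x A - infdist x B\<bar>) \<le> e"
    proof (rule cSUP_least)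
      show "{x::'a. norm x < real j} \<noteq> {}" using j by (auto intro!: exI[of _ 0])
    qed (use h in auto)
    then show ?thesis by linarith
  qed
qed

lemma dAW_lt:
  assumes AB: "A \<in> K0" "B \<in> K0" and d: "dAW A B < d" "d \<le> 1 / real j"
    and j: "j \<ge> 1" and x: "norm x < real j"
  shows "\<bar>infdist x A - infdist x B\<bar> < d"
proof -
  define s where "s j = (SUP x\<in>{x. norm x < real j}. \<bar>infdist x A - infdist x B\<bar>)" for j
  have bdd: "bdd_above ((\<lambda>j. min (1 / real j) (s j)) ` {1::nat..})"
  proof (rule bdd_aboveI2)
    fix i :: nat assume "i \<in> {1..}"
    then show "min (1 / real i) (s i) \<le> 1" by (auto simp: min_le_iff_disj)
  qed
  have "min (1 / real j) (s j) \<le> dAW A B"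
    unfolding dAW_def s_def[symmetric] using j by (intro cSUP_upper bdd) auto
  with d have "s j < d" by (auto simp: min_def split: if_splits)
  moreover have "\<bar>infdist x A - infdist x B\<bar> \<le> s j"
    unfolding s_def using x by (intro cSUP_upper inner_bdd AB) auto
  ultimately show ?thesis by linarith
qed

lemma trunc_infdist:
  assumes A: "A \<in> K0" and x: "2 * norm x \<le> R"
  shows "infdist x (A \<inter> cball 0 R) = infdist x A"
proof -
  have cl: "closed A" "A \<noteq> {}" and z: "0 \<in> A" using A by (auto simp: K0_def)
  obtain p where p: "p \<in> A" "infdist x A = dist x p" using infdist_attains_inf[OF cl] by blast
  have "dist x p \<le> norm x" using infdist_le[OF z, of x] p by simp
  moreover have "norm p \<le> norm x + dist x p"
    using norm_triangle_ineq[of x "p - x"] by (simp add: dist_norm norm_minus_commute)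
  ultimately have "norm p \<le> 2 * norm x" by linarith
  then have pin: "p \<in> A \<inter> cball 0 R" using p x by auto
  have "infdist x (A \<inter> cball 0 R) \<le> infdist x A" using infdist_le[OF pin, of x] p by simp
  moreover have "infdist x A \<le> infdist x (A \<inter> cball 0 R)"
    by (rule infdist_mono) (use pin in auto)
  ultimately show ?thesis by simp
qed

lemma trunc_hd:
  assumes A: "A \<in> K0" and B: "B \<in> K0" and R: "R \<ge> 0" "R' \<ge> 0"
    and close: "\<forall>p. norm p \<le> max R R' \<longrightarrow> infdist p B \<le> infdist p A + \<delta>"
  shows "infdist x (B \<inter> cball 0 R') \<le> infdist x (A \<inter> cball 0 R) + (2 * \<delta> + \<bar>R - R'\<bar>)"
proof -
  have Acl: "closed A" "0 \<in> A" using A by (auto simp: K0_def)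
  have Bcl: "closed B" "B \<noteq> {}" "convex B" "0 \<in> B" using B by (auto simp: K0_def)
  have A1: "closed (A \<inter> cball 0 R)" "A \<inter> cball 0 R \<noteq> {}"
    using Acl R by auto
  obtain p where p: "p \<in> A \<inter> cball 0 R" "infdist x (A \<inter> cball 0 R) = dist x p"
    using infdist_attains_inf[OF A1] by blast
  have "norm p \<le> R" using p by auto
  then have "infdist p B \<le> infdist p A + \<delta>" using close by auto
  moreover have "infdist p A = 0" using p by (auto intro: infdist_zero)
  ultimately have pB: "infdist p B \<le> \<delta>" by simp
  obtain p' where p': "p' \<in> B" "infdist p B = dist p p'"
    using infdist_attains_inf[OF Bcl(1,2)] by blast
  have "norm p' \<le> norm p + dist p p'"
    using norm_triangle_ineq[of p "p' - p"] by (simp add: dist_norm norm_minus_commute)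
  then have np': "norm p' \<le> R + \<delta>" using \<open>norm p \<le> R\<close> p' pB by linarith
  define q where "q = (if norm p' \<le> R' then p' else (R' / norm p') *\<^sub>R p')"
  have qB: "q \<in> B \<inter> cball 0 R' \<and> dist p' q \<le> \<delta> + \<bar>R - R'\<bar>"
  proof (cases "norm p' \<le> R'")
    case True
    have "0 \<le> \<delta>" using pB infdist_nonneg[of p B] by linarith
    then show ?thesis using p' True by (auto simp: q_def)
  next
    case False
    define l where "l = R' / norm p'"
    have np: "norm p' > 0" using False R by linarith
    have l: "0 \<le> l" "l \<le> 1" using False R np by (auto simp: l_def field_simps)
    have "(1 - l) *\<^sub>R 0 + l *\<^sub>R p' \<in> B"
      by (rule convexD[OF Bcl(3) Bcl(4) p'(1)]) (use l in auto)
    then have qin: "q \<in> B" using False by (simp add: q_def l_def)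
    have nq: "norm q = R'" using False np R by (simp add: q_def)
    have "p' - q = (1 - l) *\<^sub>R p'" using False by (simp add: q_def l_def algebra_simps)
    then have "dist p' q = (1 - l) * norm p'" using l by (simp add: dist_norm)
    also have "\<dots> = norm p' - R'" using np by (simp add: l_def field_simps)
    finally have "dist p' q = norm p' - R'" .
    then show ?thesis using qin nq np' by auto
  qed
  have "infdist x (B \<inter> cball 0 R') \<le> dist x q"
    using qB by (auto intro: infdist_le)
  also have "\<dots> \<le> dist x p + dist p p' + dist p' q"
    using dist_triangle[of x q p] dist_triangle[of p q p'] by linarith
  finally show ?thesis using p p' pB qB by linarith
qed

theorem lemma3p1:
  fixes r :: "real \<Rightarrow> real"
  assumes dim: "DIM('a::euclidean_space) \<ge> 2"
    and cont: "continuous_on {0<..1} r"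
    and nonneg: "\<forall>t\<in>{0<..1}. r t \<ge> 0"
    and r1: "r 1 = 0"
    and lim: "filterlim r at_top (at_right 0)"
    and pos: "\<forall>t\<in>{0<..<1}. r t > 0"
  shows "(\<forall>K\<in>(K0::'a set set). \<forall>t\<in>{0..1}. Ftrunc r K t \<in> K0)
    \<and> (\<forall>K\<in>(K0::'a set set). \<forall>t\<in>{0..1::real}. \<forall>\<epsilon>>0. \<exists>\<delta>>0.
         \<forall>K'\<in>K0. \<forall>t'\<in>{0..1}. dAW K K' < \<delta> \<and> \<bar>t - t'\<bar> < \<delta> \<longrightarrow>
           dAW (Ftrunc r K t) (Ftrunc r K' t') < \<epsilon>)"
proof
  show P1: "\<forall>K\<in>(K0::'a set set). \<forall>t\<in>{0..1}. Ftrunc r K t \<in> K0"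
  proof (intro ballI)
    fix K :: "'a set" and t :: real assume K: "K \<in> K0" and t: "t \<in> {0..1}"
    show "Ftrunc r K t \<in> K0"
    proof (cases "t = 0")
      case True then show ?thesis using K by (simp add: Ftrunc_def)
    next
      case False
      then have "r t \<ge> 0" using t nonneg by auto
      then show ?thesis using K False
        by (auto simp: Ftrunc_def K0_def intro: closed_Int convex_Int)
    qed
  qed
  show "\<forall>K\<in>(K0::'a set set). \<forall>t\<in>{0..1::real}. \<forall>\<epsilon>>0. \<exists>\<delta>>0.
         \<forall>K'\<in>K0. \<forall>t'\<in>{0..1}. dAW K K' < \<delta> \<and> \<bar>t - t'\<bar> < \<delta> \<longrightarrow>
           dAW (Ftrunc r K t) (Ftrunc r K' t') < \<epsilon>"
  proof (intro ballI allI impI)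
    fix K :: "'a set" and t :: real and \<epsilon> :: real
    assume K: "K \<in> K0" and t: "t \<in> {0..1}" and e: "\<epsilon> > 0"
    show "\<exists>\<delta>>0. \<forall>K'\<in>K0. \<forall>t'\<in>{0..1}. dAW K K' < \<delta> \<and> \<bar>t - t'\<bar> < \<delta> \<longrightarrow>
           dAW (Ftrunc r K t) (Ftrunc r K' t') < \<epsilon>"
    proof (cases "t = 0")
      case True
      define J :: nat where "J = nat \<lceil>2 / \<epsilon>\<rceil> + 1"
      have J: "J \<ge> 1" "2 / \<epsilon> \<le> real J" unfolding J_def by (auto, linarith)
      have "eventually (\<lambda>s. 2 * real J \<le> r s) (at_right 0)"
        using lim by (simp add: filterlim_at_top)
      then obtain b where b: "b > 0" "\<forall>y>0. y < b \<longrightarrow> 2 * real J \<le> r y"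
        by (auto simp: eventually_at_right_field)
      define \<delta> where "\<delta> = min (\<epsilon> / 2) (min (1 / real J) b)"
      have d: "\<delta> > 0" using e b J by (auto simp: \<delta>_def)
      show ?thesis
      proof (intro exI[of _ \<delta>] conjI d ballI impI)
        fix K' :: "'a set" and t' :: real
        assume K': "K' \<in> K0" and t': "t' \<in> {0..1}"
          and h: "dAW K K' < \<delta> \<and> \<bar>t - t'\<bar> < \<delta>"
        have F': "Ftrunc r K' t' \<in> K0" using P1 K' t' by blast
        have "dAW K (Ftrunc r K' t') \<le> \<epsilon> / 2"
        proof (rule dAW_le[OF K F'], intro allI impI)
          fix j :: nat assume j: "j \<ge> 1"
          show "1 / real j \<le> \<epsilon> / 2 \<or> (\<forall>x. norm x < real j \<longrightarrow>
                  \<bar>infdist x K - infdist x (Ftrunc r K' t')\<bar> \<le> \<epsilon> / 2)"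
          proof (cases "1 / real j \<le> \<epsilon> / 2")
            case False
            then have "real j < 2 / \<epsilon>" using e j by (auto simp: field_simps)
            then have jJ: "real j \<le> real J" using J by linarith
            have "\<forall>x. norm x < real j \<longrightarrow> \<bar>infdist x K - infdist x (Ftrunc r K' t')\<bar> \<le> \<epsilon> / 2"
            proof (intro allI impI)
              fix x :: 'a assume x: "norm x < real j"
              have "\<bar>infdist x K - infdist x K'\<bar> < \<delta>"
                by (rule dAW_lt[OF K K' _ _ J(1)]) (use h x jJ in \<open>auto simp: \<delta>_def\<close>)
              moreover have "infdist x (Ftrunc r K' t') = infdist x K'"
              proof (cases "t' = 0")
                case True then show ?thesis by (simp add: Ftrunc_def)
              next
                case False
                then have "t' > 0" "t' < b" using t' h \<open>t = 0\<close> by (auto simp: \<delta>_def)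
                then have "2 * real J \<le> r t'" using b by auto
                then have "2 * norm x \<le> r t'" using x jJ by linarith
                then show ?thesis using False trunc_infdist[OF K'] by (simp add: Ftrunc_def)
              qed
              ultimately show "\<bar>infdist x K - infdist x (Ftrunc r K' t')\<bar> \<le> \<epsilon> / 2"
                by (simp add: \<delta>_def)
            qed
            then show ?thesis by blast
          qed simp
        qed
        then show "dAW (Ftrunc r K t) (Ftrunc r K' t') < \<epsilon>"
          using True e by (simp add: Ftrunc_def)
      qed
    next
      case False
      then have t0: "t > 0" "t \<le> 1" using t by auto
      define R where "R = r t"
      have R: "R \<ge> 0" using nonneg t0 by (auto simp: R_def)
      obtain \<eta> where eta: "\<eta> > 0"
        "\<forall>t'\<in>{0<..1}. dist t' t < \<eta> \<longrightarrow> dist (r t') (r t) < \<epsilon> / 4"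
        using cont t0 e unfolding continuous_on_iff
        by (metis divide_pos_pos greaterThanAtMost_iff zero_less_numeral)
      define J :: nat where "J = nat \<lceil>R + \<epsilon>\<rceil> + 1"
      have J: "J \<ge> 1" "R + \<epsilon> / 4 < real J" unfolding J_def using e by (auto, linarith)
      define \<delta> where "\<delta> = min (min (\<epsilon> / 8) (1 / real J)) (min \<eta> t)"
      have d: "\<delta> > 0" using e eta J t0 by (auto simp: \<delta>_def)
      show ?thesis
      proof (intro exI[of _ \<delta>] conjI d ballI impI)
        fix K' :: "'a set" and t' :: real
        assume K': "K' \<in> K0" and t': "t' \<in> {0..1}"
          and h: "dAW K K' < \<delta> \<and> \<bar>t - t'\<bar> < \<delta>"
        have t'0: "t' > 0" using h t' by (auto simp: \<delta>_def)
        define R' where "R' = r t'"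
        have R': "R' \<ge> 0" using nonneg t'0 t' by (auto simp: R'_def)
        have "dist (r t') (r t) < \<epsilon> / 4" using eta t' t'0 h by (auto simp: \<delta>_def dist_real_def)
        then have RR: "\<bar>R - R'\<bar> < \<epsilon> / 4" by (simp add: R_def R'_def dist_real_def abs_minus_commute)
        have FK: "Ftrunc r K t = K \<inter> cball 0 R" using t0 by (simp add: Ftrunc_def R_def)
        have FK': "Ftrunc r K' t' = K' \<inter> cball 0 R'" using t'0 by (simp add: Ftrunc_def R'_def)
        have cl: "\<forall>p. norm p \<le> max R R' \<longrightarrow> \<bar>infdist p K - infdist p K'\<bar> < \<delta>"
        proof (intro allI impI)
          fix p :: 'a assume "norm p \<le> max R R'"
          then have np: "norm p < real J" using RR J by (auto simp: max_def split: if_splits)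
          show "\<bar>infdist p K - infdist p K'\<bar> < \<delta>"
            by (rule dAW_lt[OF K K' _ _ J(1) np]) (use h in \<open>auto simp: \<delta>_def\<close>)
        qed
        have b1: "infdist x (K' \<inter> cball 0 R') \<le> infdist x (K \<inter> cball 0 R) + (2 * \<delta> + \<bar>R - R'\<bar>)" for x
          by (rule trunc_hd[OF K K' R R']) (use cl in \<open>auto simp: abs_less_iff\<close>)
        have b2: "infdist x (K \<inter> cball 0 R) \<le> infdist x (K' \<inter> cball 0 R') + (2 * \<delta> + \<bar>R' - R\<bar>)" for x
          by (rule trunc_hd[OF K' K R' R]) (use cl in \<open>auto simp: abs_less_iff max.commute\<close>)
        have "2 * \<delta> \<le> \<epsilon> / 4" by (simp add: \<delta>_def)
        then have "\<bar>infdist x (K \<inter> cball 0 R) - infdist x (K' \<inter> cball 0 R')\<bar> \<le> \<epsilon> / 2" for x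
          using b1[of x] b2[of x] RR abs_minus_commute[of R' R] unfolding abs_le_iff by linarith
        then have "dAW (K \<inter> cball 0 R) (K' \<inter> cball 0 R') \<le> \<epsilon> / 2"
          using P1 K K' t t' FK FK'
          by (intro dAW_le) (metis, metis, blast)
        then show "dAW (Ftrunc r K t) (Ftrunc r K' t') < \<epsilon>" using FK FK' e by simp
      qed
    qed
  qed
qed

end
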